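(* Let $A$ be a finite skew brace and let $\Lambda(x_1),\dots,\Lambda(x_k)$ be its $\lambda$-orbits of size greater than $1$. Then \[A^2=\Big\langle \bigcup_{i=1}^k\big(\Lambda(x_i)-\Lambda(x_i)\big)\Big\rangle_+,\] where $\Lambda(x_i)-\Lambda(x_i)=\{u-v: u,v\in\Lambda(x_i)\}$ and $\langle\cdot\rangle_+$ denotes the generated subgroup of $(A,+)$. In particular $|A^2|\ge|\Lambda(x_i)|$ for all $i$.
   Context: A skew brace is a triple $(A,+,\circ)$ where $(A,+)$ and $(A,\circ)$ are groups with $a\circ(b+c)=a\circ b-a+a\circ c$ for all $a,b,c$. $\lambda_a(b)=-a+a\circ b$; the $\lambda$-orbit of $x$ is $\Lambda(x)=\{\lambda_a(x):a\in A\}$. $A^2$ is the subgroup of $(A,+)$ generated by all $a*b=\lambda_a(b)-b$, $a,b\in A$. *)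

theory Defs
  imports "HOL-Algebra.Algebra"
begin

(* A skew brace: the additive group (A,+) is the HOL-Algebra group G
(its multiplication plays the role of +), the circle group (A,o)
is the HOL-Algebra group C on the same carrier. *)

definition skew_brace :: "('a, 'm) monoid_scheme \<Rightarrow> ('a, 'n) monoid_scheme \<Rightarrow> bool" where
  "skew_brace G C \<longleftrightarrow> group G \<and> group C \<and> carrier C = carrier G \<and>
     (\<forall>a\<in>carrier G. \<forall>b\<in>carrier G. \<forall>c\<in>carrier G.
        a \<otimes>\<^bsub>C\<^esub> (b \<otimes>\<^bsub>G\<^esub> c)
        = (a \<otimes>\<^bsub>C\<^esub> b) \<otimes>\<^bsub>G\<^esub> inv\<^bsub>G\<^esub> a \<otimes>\<^bsub>G\<^esub> (a \<otimes>\<^bsub>C\<^esub> c))"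

definition brace_lambda :: "('a, 'm) monoid_scheme \<Rightarrow> ('a, 'n) monoid_scheme \<Rightarrow> 'a \<Rightarrow> 'a \<Rightarrow> 'a" where
  "brace_lambda G C a b = inv\<^bsub>G\<^esub> a \<otimes>\<^bsub>G\<^esub> (a \<otimes>\<^bsub>C\<^esub> b)"

definition lambda_orbit :: "('a, 'm) monoid_scheme \<Rightarrow> ('a, 'n) monoid_scheme \<Rightarrow> 'a \<Rightarrow> 'a set" where
  "lambda_orbit G C x = {brace_lambda G C a x | a. a \<in> carrier G}"

definition brace_star :: "('a, 'm) monoid_scheme \<Rightarrow> ('a, 'n) monoid_scheme \<Rightarrow> 'a \<Rightarrow> 'a \<Rightarrow> 'a" where
  "brace_star G C a b = brace_lambda G C a b \<otimes>\<^bsub>G\<^esub> inv\<^bsub>G\<^esub> b"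

definition brace_sq :: "('a, 'm) monoid_scheme \<Rightarrow> ('a, 'n) monoid_scheme \<Rightarrow> 'a set" where
  "brace_sq G C = generate G {brace_star G C a b | a b. a \<in> carrier G \<and> b \<in> carrier G}"

definition set_diff_self :: "('a, 'm) monoid_scheme \<Rightarrow> 'a set \<Rightarrow> 'a set" where
  "set_diff_self G S = {(u \<otimes>\<^bsub>G\<^esub> (inv\<^bsub>G\<^esub> v)) | u v. u \<in> S \<and> v \<in> S}"

end

theory Submission
  imports Defs
begin

lemma sb_one:
  assumes sb: "skew_brace G C"
  shows "\<one>\<^bsub>C\<^esub> = \<one>\<^bsub>G\<^esub>"
proof -
  interpret G: group G using sb unfolding skew_brace_def by auto
  interpret C: group C using sb unfolding skew_brace_def by auto
  have cc: "carrier C = carrier G" using sb unfolding skew_brace_def by auto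
  have ax: "\<And>a b c. a \<in> carrier G \<Longrightarrow> b \<in> carrier G \<Longrightarrow> c \<in> carrier G \<Longrightarrow>
     a \<otimes>\<^bsub>C\<^esub> (b \<otimes>\<^bsub>G\<^esub> c)
        = (a \<otimes>\<^bsub>C\<^esub> b) \<otimes>\<^bsub>G\<^esub> inv\<^bsub>G\<^esub> a \<otimes>\<^bsub>G\<^esub> (a \<otimes>\<^bsub>C\<^esub> c)"
    using sb unfolding skew_brace_def by blast
  let ?a = "\<one>\<^bsub>C\<^esub>" let ?z = "\<one>\<^bsub>G\<^esub>"
  have a: "?a \<in> carrier G" using cc by auto
  have zc: "?a \<otimes>\<^bsub>C\<^esub> ?z \<in> carrier G" using cc a by (metis C.m_closed G.one_closed)
  have "?a \<otimes>\<^bsub>C\<^esub> (?z \<otimes>\<^bsub>G\<^esub> ?z) = (?a \<otimes>\<^bsub>C\<^esub> ?z) \<otimes>\<^bsub>G\<^esub> inv\<^bsub>G\<^esub> ?a \<otimes>\<^bsub>G\<^esub> (?a \<otimes>\<^bsub>C\<^esub> ?z)"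
    using ax[OF a G.one_closed G.one_closed] by simp
  hence "(?a \<otimes>\<^bsub>C\<^esub> ?z) = (?a \<otimes>\<^bsub>C\<^esub> ?z) \<otimes>\<^bsub>G\<^esub> (inv\<^bsub>G\<^esub> ?a \<otimes>\<^bsub>G\<^esub> (?a \<otimes>\<^bsub>C\<^esub> ?z))"
    using a zc by (simp add: G.m_assoc)
  hence "inv\<^bsub>G\<^esub> ?a \<otimes>\<^bsub>G\<^esub> (?a \<otimes>\<^bsub>C\<^esub> ?z) = ?z"
    using a zc by (metis G.inv_closed G.m_closed G.r_one G.l_cancel G.one_closed)
  hence "?a \<otimes>\<^bsub>C\<^esub> ?z = ?a" using a zc by (metis G.inv_equality G.inv_inv G.inv_closed G.l_inv G.r_one G.m_assoc G.inv_comm)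
  thus ?thesis using cc by (metis C.l_one G.one_closed)
qed

lemma sb_lambda_comp:
  assumes sb: "skew_brace G C" and a: "a \<in> carrier G" and b: "b \<in> carrier G" and x: "x \<in> carrier G"
  shows "brace_lambda G C a (brace_lambda G C b x) = brace_lambda G C (a \<otimes>\<^bsub>C\<^esub> b) x"
proof -
  interpret G: group G using sb unfolding skew_brace_def by auto
  interpret C: group C using sb unfolding skew_brace_def by auto
  have cc: "carrier C = carrier G" using sb unfolding skew_brace_def by auto
  have ax: "\<And>a b c. a \<in> carrier G \<Longrightarrow> b \<in> carrier G \<Longrightarrow> c \<in> carrier G \<Longrightarrow>
     a \<otimes>\<^bsub>C\<^esub> (b \<otimes>\<^bsub>G\<^esub> c)
        = (a \<otimes>\<^bsub>C\<^esub> b) \<otimes>\<^bsub>G\<^esub> inv\<^bsub>G\<^esub> a \<otimes>\<^bsub>G\<^esub> (a \<otimes>\<^bsub>C\<^esub> c)"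
    using sb unfolding skew_brace_def by blast
  have one: "\<one>\<^bsub>C\<^esub> = \<one>\<^bsub>G\<^esub>" by (rule sb_one[OF sb])
  have cl: "\<And>p q. p \<in> carrier G \<Longrightarrow> q \<in> carrier G \<Longrightarrow> p \<otimes>\<^bsub>C\<^esub> q \<in> carrier G"
    using cc by (metis C.m_closed)
  have ab: "a \<otimes>\<^bsub>C\<^esub> b \<in> carrier G" using cl a b .
  have ac: "\<And>p q r. p \<in> carrier G \<Longrightarrow> q \<in> carrier G \<Longrightarrow> r \<in> carrier G \<Longrightarrow> p \<otimes>\<^bsub>C\<^esub> q \<otimes>\<^bsub>C\<^esub> r = p \<otimes>\<^bsub>C\<^esub> (q \<otimes>\<^bsub>C\<^esub> r)"
    using cc by (metis C.m_assoc)
  have aone: "a \<otimes>\<^bsub>C\<^esub> \<one>\<^bsub>G\<^esub> = a" using a cc one by (metis C.r_one)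
  have "a = a \<otimes>\<^bsub>C\<^esub> (b \<otimes>\<^bsub>G\<^esub> inv\<^bsub>G\<^esub> b)" using aone b by simp
  also have "\<dots> = (a \<otimes>\<^bsub>C\<^esub> b) \<otimes>\<^bsub>G\<^esub> inv\<^bsub>G\<^esub> a \<otimes>\<^bsub>G\<^esub> (a \<otimes>\<^bsub>C\<^esub> inv\<^bsub>G\<^esub> b)"
    using ax[OF a b G.inv_closed[OF b]] by simp
  finally have e1: "a = (a \<otimes>\<^bsub>C\<^esub> b) \<otimes>\<^bsub>G\<^esub> inv\<^bsub>G\<^esub> a \<otimes>\<^bsub>G\<^esub> (a \<otimes>\<^bsub>C\<^esub> inv\<^bsub>G\<^esub> b)" .
  have ainvb: "a \<otimes>\<^bsub>C\<^esub> inv\<^bsub>G\<^esub> b \<in> carrier G" using cl a b by auto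
  have e2: "a \<otimes>\<^bsub>C\<^esub> inv\<^bsub>G\<^esub> b = a \<otimes>\<^bsub>G\<^esub> inv\<^bsub>G\<^esub> (a \<otimes>\<^bsub>C\<^esub> b) \<otimes>\<^bsub>G\<^esub> a"
  proof -
    have "inv\<^bsub>G\<^esub> (a \<otimes>\<^bsub>C\<^esub> b) \<otimes>\<^bsub>G\<^esub> a = inv\<^bsub>G\<^esub> a \<otimes>\<^bsub>G\<^esub> (a \<otimes>\<^bsub>C\<^esub> inv\<^bsub>G\<^esub> b)"
      using e1 a ab ainvb by (metis G.inv_closed G.m_assoc G.m_closed G.inv_solve_left)
    thus ?thesis using a ab ainvb by (metis G.inv_closed G.m_assoc G.m_closed G.inv_solve_left G.inv_inv)
  qed
  have bx: "b \<otimes>\<^bsub>C\<^esub> x \<in> carrier G" using cl b x .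
  have "brace_lambda G C a (brace_lambda G C b x)
      = inv\<^bsub>G\<^esub> a \<otimes>\<^bsub>G\<^esub> (a \<otimes>\<^bsub>C\<^esub> (inv\<^bsub>G\<^esub> b \<otimes>\<^bsub>G\<^esub> (b \<otimes>\<^bsub>C\<^esub> x)))"
    unfolding brace_lambda_def ..
  also have "\<dots> = inv\<^bsub>G\<^esub> a \<otimes>\<^bsub>G\<^esub> ((a \<otimes>\<^bsub>C\<^esub> inv\<^bsub>G\<^esub> b) \<otimes>\<^bsub>G\<^esub> inv\<^bsub>G\<^esub> a \<otimes>\<^bsub>G\<^esub> (a \<otimes>\<^bsub>C\<^esub> (b \<otimes>\<^bsub>C\<^esub> x)))"
    using ax a b bx by auto
  also have "\<dots> = inv\<^bsub>G\<^esub> a \<otimes>\<^bsub>G\<^esub> ((a \<otimes>\<^bsub>G\<^esub> inv\<^bsub>G\<^esub> (a \<otimes>\<^bsub>C\<^esub> b) \<otimes>\<^bsub>G\<^esub> a) \<otimes>\<^bsub>G\<^esub> inv\<^bsub>G\<^esub> a \<otimes>\<^bsub>G\<^esub> ((a \<otimes>\<^bsub>C\<^esub> b) \<otimes>\<^bsub>C\<^esub> x))"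
    using e2 ac a b x by simp
  also have "\<dots> = inv\<^bsub>G\<^esub> (a \<otimes>\<^bsub>C\<^esub> b) \<otimes>\<^bsub>G\<^esub> ((a \<otimes>\<^bsub>C\<^esub> b) \<otimes>\<^bsub>C\<^esub> x)"
    using a ab cl[OF ab x] by (simp add: G.m_assoc[symmetric] G.l_inv G.r_inv)
      (simp add: G.m_assoc)
  finally show ?thesis unfolding brace_lambda_def .
qed

lemma sb_lambda_one:
  assumes sb: "skew_brace G C" and x: "x \<in> carrier G"
  shows "brace_lambda G C \<one>\<^bsub>G\<^esub> x = x"
proof -
  interpret G: group G using sb unfolding skew_brace_def by auto
  interpret C: group C using sb unfolding skew_brace_def by auto
  have cc: "carrier C = carrier G" using sb unfolding skew_brace_def by auto
  show ?thesis using sb_one[OF sb] x cc unfolding brace_lambda_def by (metis C.l_one G.inv_one G.l_one)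
qed

lemma sb_lambda_closed:
  assumes sb: "skew_brace G C" and a: "a \<in> carrier G" and x: "x \<in> carrier G"
  shows "brace_lambda G C a x \<in> carrier G"
proof -
  interpret G: group G using sb unfolding skew_brace_def by auto
  interpret C: group C using sb unfolding skew_brace_def by auto
  have cc: "carrier C = carrier G" using sb unfolding skew_brace_def by auto
  show ?thesis using a x cc unfolding brace_lambda_def by (metis C.m_closed G.inv_closed G.m_closed)
qed

theorem mainTheorem6:
  fixes G :: "('a, 'm) monoid_scheme" and C :: "('a, 'n) monoid_scheme"
  assumes "skew_brace G C"
    and "finite (carrier G)"
  shows "brace_sq G C =
           generate G (\<Union>x \<in> {x \<in> carrier G. card (lambda_orbit G C x) > 1}.
                          set_diff_self G (lambda_orbit G C x))
         \<and> (\<forall>x \<in> carrier G. card (lambda_orbit G C x) > 1 \<longrightarrow>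
              card (brace_sq G C) \<ge> card (lambda_orbit G C x))"
proof -
  note sb = assms(1)
  interpret G: group G using sb unfolding skew_brace_def by auto
  interpret C: group C using sb unfolding skew_brace_def by auto
  have cc: "carrier C = carrier G" using sb unfolding skew_brace_def by auto
  define S1 where "S1 = {brace_star G C a b | a b. a \<in> carrier G \<and> b \<in> carrier G}"
  define S2 where "S2 = (\<Union>x \<in> {x \<in> carrier G. card (lambda_orbit G C x) > 1}.
                          set_diff_self G (lambda_orbit G C x))"
  have S1c: "S1 \<subseteq> carrier G" unfolding S1_def brace_star_def
    using sb_lambda_closed[OF sb] by auto
  have S21: "S2 \<subseteq> S1"
  proof
    fix w assume "w \<in> S2"
    then obtain x u v where x: "x \<in> carrier G" and u: "u \<in> lambda_orbit G C x" and v: "v \<in> lambda_orbit G C x"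
      and w: "w = u \<otimes>\<^bsub>G\<^esub> inv\<^bsub>G\<^esub> v"
      unfolding S2_def set_diff_self_def by auto
    obtain a where a: "a \<in> carrier G" and ua: "u = brace_lambda G C a x" using u unfolding lambda_orbit_def by auto
    obtain c where c: "c \<in> carrier G" and vc: "v = brace_lambda G C c x" using v unfolding lambda_orbit_def by auto
    have ic: "inv\<^bsub>C\<^esub> c \<in> carrier G" using c cc by (metis C.inv_closed)
    have d: "a \<otimes>\<^bsub>C\<^esub> inv\<^bsub>C\<^esub> c \<in> carrier G" using a ic cc by (metis C.m_closed)
    have vcar: "v \<in> carrier G" using vc sb_lambda_closed[OF sb c x] by simp
    have "brace_lambda G C (a \<otimes>\<^bsub>C\<^esub> inv\<^bsub>C\<^esub> c) v
        = brace_lambda G C a (brace_lambda G C (inv\<^bsub>C\<^esub> c) (brace_lambda G C c x))"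
      using vc sb_lambda_comp[OF sb a ic] sb_lambda_closed[OF sb c x] by simp
    also have "\<dots> = brace_lambda G C a (brace_lambda G C (inv\<^bsub>C\<^esub> c \<otimes>\<^bsub>C\<^esub> c) x)"
      using sb_lambda_comp[OF sb ic c x] by simp
    also have "\<dots> = u" using ua c cc sb_one[OF sb] sb_lambda_one[OF sb x] by (metis C.l_inv)
    finally have "w = brace_star G C (a \<otimes>\<^bsub>C\<^esub> inv\<^bsub>C\<^esub> c) v"
      unfolding brace_star_def w by simp
    thus "w \<in> S1" unfolding S1_def using d vcar by blast
  qed
  have S12: "S1 \<subseteq> S2 \<union> {\<one>\<^bsub>G\<^esub>}"
  proof
    fix w assume "w \<in> S1"
    then obtain a b where a: "a \<in> carrier G" and b: "b \<in> carrier G" and w: "w = brace_star G C a b"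
      unfolding S1_def by auto
    have bin: "b \<in> lambda_orbit G C b" unfolding lambda_orbit_def
      using sb_lambda_one[OF sb b] by (metis (mono_tags, lifting) G.one_closed mem_Collect_eq)
    have ain: "brace_lambda G C a b \<in> lambda_orbit G C b" unfolding lambda_orbit_def using a by blast
    have fin: "finite (lambda_orbit G C b)"
    proof -
      have "lambda_orbit G C b = (\<lambda>a. brace_lambda G C a b) ` carrier G"
        unfolding lambda_orbit_def by auto
      thus ?thesis using assms(2) by simp
    qed
    show "w \<in> S2 \<union> {\<one>\<^bsub>G\<^esub>}"
    proof (cases "card (lambda_orbit G C b) > 1")
      case True
      hence "w \<in> set_diff_self G (lambda_orbit G C b)" unfolding set_diff_self_def w brace_star_def
        using ain bin by blast
      thus ?thesis unfolding S2_def using True b by blast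
    next
      case False
      have "card (lambda_orbit G C b) \<le> 1" using False by simp
      hence "brace_lambda G C a b = b" using fin ain bin card_le_Suc0_iff_eq[of "lambda_orbit G C b"] by (simp add: One_nat_def)
      thus ?thesis using w b unfolding brace_star_def by simp
    qed
  qed
  have S2c: "S2 \<subseteq> carrier G" using S21 S1c by auto
  have eq: "brace_sq G C = generate G S2"
  proof
    show "brace_sq G C \<subseteq> generate G S2" unfolding brace_sq_def S1_def[symmetric]
    proof (rule G.generate_subgroup_incl[OF _ G.generate_is_subgroup[OF S2c]])
      show "S1 \<subseteq> generate G S2" using S12 generate.incl[of _ S2 G] generate.one[of G S2] by blast
    qed
    show "generate G S2 \<subseteq> brace_sq G C" unfolding brace_sq_def S1_def[symmetric]
      using G.mono_generate[OF S21] .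
  qed
  have fsq: "finite (brace_sq G C)" unfolding brace_sq_def S1_def[symmetric]
    using G.generate_incl[OF S1c] assms(2) finite_subset by blast
  have card: "card (brace_sq G C) \<ge> card (lambda_orbit G C x)"
    if x: "x \<in> carrier G" and big: "card (lambda_orbit G C x) > 1" for x
  proof -
    have xin: "x \<in> lambda_orbit G C x" unfolding lambda_orbit_def
      using sb_lambda_one[OF sb x] by (metis (mono_tags, lifting) G.one_closed mem_Collect_eq)
    have oc: "lambda_orbit G C x \<subseteq> carrier G" unfolding lambda_orbit_def
      using sb_lambda_closed[OF sb _ x] by auto
    have inj: "inj_on (\<lambda>u. u \<otimes>\<^bsub>G\<^esub> inv\<^bsub>G\<^esub> x) (lambda_orbit G C x)"
      using oc x by (intro inj_onI) (metis G.inv_closed G.r_cancel subsetD)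
    have "(\<lambda>u. u \<otimes>\<^bsub>G\<^esub> inv\<^bsub>G\<^esub> x) ` lambda_orbit G C x \<subseteq> S2"
      unfolding S2_def set_diff_self_def using x big xin by blast
    also have "\<dots> \<subseteq> brace_sq G C" using eq generate.incl[of _ S2 G] by blast
    finally show ?thesis using card_inj_on_le[OF inj _ fsq] by blast
  qed
  show ?thesis using eq card unfolding S2_def by blast
qed

end
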